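(* Let $L$ be a finite extension of $\mathbb{Z}_\mathrm{max}$ such that $L$ is selective, i.e. for all $x,y\in L$ either $x+y=x$ or $x+y=y$. Then $\mathrm{ui}(L/\mathbb{Z}_\mathrm{max})<\infty$.
   Context: A semifield is a commutative semiring in which every nonzero element is a unit. $\mathbb{Z}_\mathrm{max}=\mathbb{Z}\cup\{-\infty\}$ is the semifield with addition $\max$ and multiplication ordinary addition. An extension of a semifield $K$ is a semifield $L$ with an injective homomorphism $K\to L$; it is finite if $L$ is a finitely generated $K$-semimodule. The unit index is $\mathrm{ui}(L/K)=|L^\times/K^\times|$. *)

theory Defs
  imports Main
begin

class semifield = comm_semiring_1 +
  assumes nonzero_unit: "x \<noteq> 0 \<Longrightarrow> \<exists>y. x * y = 1"

text \<open>The semifield Z_max = Z \<union> {-\<infinity>}, represented as int option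
(None = -\<infinity>); addition is max, multiplication is ordinary addition.\<close>
type_synonym zmax = "int option"

fun zmax_add :: "zmax \<Rightarrow> zmax \<Rightarrow> zmax" where
  "zmax_add None y = y"
| "zmax_add x None = x"
| "zmax_add (Some a) (Some b) = Some (max a b)"

fun zmax_mult :: "zmax \<Rightarrow> zmax \<Rightarrow> zmax" where
  "zmax_mult (Some a) (Some b) = Some (a + b)"
| "zmax_mult _ _ = None"

definition zmax_zero :: zmax where "zmax_zero = None"
definition zmax_one :: zmax where "zmax_one = Some 0"

definition zmax_extension :: "(zmax \<Rightarrow> 'a::semifield) \<Rightarrow> bool" where
  "zmax_extension \<phi> \<longleftrightarrow> inj \<phi> \<and> \<phi> zmax_zero = 0 \<and> \<phi> zmax_one = 1 \<and>
     (\<forall>x y. \<phi> (zmax_add x y) = \<phi> x + \<phi> y) \<and>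
     (\<forall>x y. \<phi> (zmax_mult x y) = \<phi> x * \<phi> y)"

definition finite_extension :: "(zmax \<Rightarrow> 'a::semifield) \<Rightarrow> bool" where
  "finite_extension \<phi> \<longleftrightarrow> zmax_extension \<phi> \<and>
     (\<exists>S. finite S \<and> (\<forall>x::'a. \<exists>c. x = (\<Sum>s\<in>S. \<phi> (c s) * s)))"

definition selective :: "'a::semifield itself \<Rightarrow> bool" where
  "selective _ \<longleftrightarrow> (\<forall>x y :: 'a. x + y = x \<or> x + y = y)"

definition units :: "'a::semifield set" where
  "units = {x. \<exists>y. x * y = 1}"

definition base_units :: "(zmax \<Rightarrow> 'a::semifield) \<Rightarrow> 'a set" where
  "base_units \<phi> = \<phi> ` {x. \<exists>y. zmax_mult x y = zmax_one}"

text \<open>The cosets of L^\<times>/K^\<times>; the unit index is the number of them.\<close>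
definition unit_cosets :: "(zmax \<Rightarrow> 'a::semifield) \<Rightarrow> 'a set set" where
  "unit_cosets \<phi> = (\<lambda>x. (\<lambda>u. x * u) ` base_units \<phi>) ` units"

end

theory Submission
  imports Defs
begin

lemma sel_sum:
  assumes sel: "selective TYPE('a::semifield)" and fin: "finite S"
  shows "sum (f :: _ \<Rightarrow> 'a) S = 0 \<or> (\<exists>s\<in>S. sum f S = f s)"
  using fin
proof (induction S rule: finite_induct)
  case empty then show ?case by simp
next
  case (insert x F)
  have "f x + sum f F = f x \<or> f x + sum f F = sum f F"
    using sel unfolding selective_def by blast
  then show ?case using insert by auto
qed

lemma zmax_units: "{x. \<exists>y. zmax_mult x y = zmax_one} = range Some"
proof -
  have "zmax_mult x y = zmax_one \<Longrightarrow> x \<in> range Some" for x y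
    by (cases x; cases y) (auto simp: zmax_one_def)
  moreover have "\<exists>y. zmax_mult (Some a) y = zmax_one" for a
    by (rule exI[of _ "Some (-a)"]) (simp add: zmax_one_def)
  ultimately show ?thesis by blast
qed

theorem mainTheorem9:
  fixes \<phi> :: "zmax \<Rightarrow> 'a::semifield"
  assumes "finite_extension \<phi>"
    and "selective TYPE('a)"
  shows "finite (unit_cosets \<phi>)"
proof -
  from assms(1) obtain S where fS: "finite S"
    and gen: "\<forall>x::'a. \<exists>c. x = (\<Sum>s\<in>S. \<phi> (c s) * s)"
    and ext: "zmax_extension \<phi>"
    unfolding finite_extension_def by blast
  have z: "\<phi> None = 0" using ext unfolding zmax_extension_def zmax_zero_def by simp
  have m: "\<And>x y. \<phi> (zmax_mult x y) = \<phi> x * \<phi> y"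
    using ext unfolding zmax_extension_def by blast
  define B where "B = base_units \<phi>"
  have B: "B = (\<lambda>b. \<phi> (Some b)) ` UNIV"
    unfolding B_def base_units_def zmax_units by auto
  have key: "(\<lambda>u. x * u) ` B \<in> (\<lambda>s. (\<lambda>u. s * u) ` B) ` S" if xu: "x \<in> units" for x
  proof -
    have x0: "x \<noteq> 0" using xu unfolding units_def by auto
    obtain c where xc: "x = (\<Sum>s\<in>S. \<phi> (c s) * s)" using gen by blast
    then obtain s where sS: "s \<in> S" and xs: "x = \<phi> (c s) * s"
      using sel_sum[OF assms(2) fS, of "\<lambda>s. \<phi> (c s) * s"] x0 by auto
    obtain a where ca: "c s = Some a"
      using xs x0 z by (cases "c s") auto
    have "(\<lambda>u. x * u) ` B = (\<lambda>u. s * u) ` B"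
    proof
      show "(\<lambda>u. x * u) ` B \<subseteq> (\<lambda>u. s * u) ` B"
      proof
        fix y assume "y \<in> (\<lambda>u. x * u) ` B"
        then obtain b where y: "y = x * \<phi> (Some b)" using B by auto
        have "y = s * \<phi> (Some (a + b))"
          using y xs ca m[of "Some a" "Some b"] by (simp add: ac_simps)
        then show "y \<in> (\<lambda>u. s * u) ` B" using B by auto
      qed
    next
      show "(\<lambda>u. s * u) ` B \<subseteq> (\<lambda>u. x * u) ` B"
      proof
        fix y assume "y \<in> (\<lambda>u. s * u) ` B"
        then obtain b where y: "y = s * \<phi> (Some b)" using B by auto
        have "y = x * \<phi> (Some (b - a))"
          using y xs ca m[of "Some a" "Some (b - a)"] by (simp add: ac_simps)
        then show "y \<in> (\<lambda>u. x * u) ` B" using B by auto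
      qed
    qed
    then show ?thesis using sS by auto
  qed
  have "unit_cosets \<phi> \<subseteq> (\<lambda>s. (\<lambda>u. s * u) ` B) ` S"
    unfolding unit_cosets_def B_def[symmetric] using key by auto
  then show ?thesis using fS finite_subset by blast
qed

end
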